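(* Let $\mathcal{C}$ be a category and $A$ an object of $\mathcal{C}$ satisfying the axioms RC0, RC1, RC2 below. Then for every object $X$ of $\mathcal{C}$, the group $\mathrm{Aut}(A)$ acts transitively on the set $[A,X]$ by $(h,x)\mapsto x\circ h$.
   Context: An arrow $f\colon X\to Y$ is a strict epimorphism if for every arrow $g\colon X\to Z$ compatible with $f$ (for every object $C$ and all $u,v\colon C\to X$ with $f\circ u=f\circ v$ one has $g\circ u=g\circ v$) there is a unique $k\colon Y\to Z$ with $g=k\circ f$. For a group $H$ acting on $A$ by automorphisms (a homomorphism $H\to\mathrm{Aut}(A)^{op}$), the quotient $q\colon A\to A/H$ is an arrow with $q\circ h=q$ for all $h\in H$, universal among such arrows. Axioms: RC0: for every object $X$ there exists an arrow $A\to X$, and every arrow $A\to X$ is a strict epimorphism. RC1: for every subgroup $H\subseteq\mathrm{Aut}(A)$ the quotient $q\colon A\to A/H$ exists and the map $[A,A]\to[A,A/H]$, $f\mapsto q\circ f$, is surjective with $q\circ f=q\circ g$ iff $f=h\circ g$ for some $h\in H$. RC2: $[A,A]=\mathrm{Aut}(A)$. *)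

theory Defs
  imports Main
begin

text \<open>A (locally small) category: objects are the elements of type 'o, arrows are
  elements of type 'm, Hom X Y is the set of arrows X \<rightarrow> Y, cmp g f is g \<circ> f,
  ident X is the identity of X.\<close>

definition category :: "('o \<Rightarrow> 'o \<Rightarrow> 'm set) \<Rightarrow> ('m \<Rightarrow> 'm \<Rightarrow> 'm) \<Rightarrow> ('o \<Rightarrow> 'm) \<Rightarrow> bool" where
  "category Hom cmp ident \<longleftrightarrow>
     (\<forall>X Y Z f g. f \<in> Hom X Y \<longrightarrow> g \<in> Hom Y Z \<longrightarrow> cmp g f \<in> Hom X Z) \<and>
     (\<forall>X. ident X \<in> Hom X X) \<and>
     (\<forall>X Y f. f \<in> Hom X Y \<longrightarrow> cmp (ident Y) f = f \<and> cmp f (ident X) = f) \<and>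
     (\<forall>W X Y Z f g h. f \<in> Hom W X \<longrightarrow> g \<in> Hom X Y \<longrightarrow> h \<in> Hom Y Z \<longrightarrow>
         cmp h (cmp g f) = cmp (cmp h g) f) \<and>
     (\<forall>X Y X' Y' f. f \<in> Hom X Y \<longrightarrow> f \<in> Hom X' Y' \<longrightarrow> X = X' \<and> Y = Y')"

definition strict_epi :: "('o \<Rightarrow> 'o \<Rightarrow> 'm set) \<Rightarrow> ('m \<Rightarrow> 'm \<Rightarrow> 'm) \<Rightarrow> 'o \<Rightarrow> 'o \<Rightarrow> 'm \<Rightarrow> bool" where
  "strict_epi Hom cmp X Y f \<longleftrightarrow> f \<in> Hom X Y \<and>
     (\<forall>Z g. g \<in> Hom X Z \<longrightarrow>
        (\<forall>C u v. u \<in> Hom C X \<longrightarrow> v \<in> Hom C X \<longrightarrow> cmp f u = cmp f v \<longrightarrow> cmp g u = cmp g v) \<longrightarrow>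
        (\<exists>!k. k \<in> Hom Y Z \<and> g = cmp k f))"

definition Aut :: "('o \<Rightarrow> 'o \<Rightarrow> 'm set) \<Rightarrow> ('m \<Rightarrow> 'm \<Rightarrow> 'm) \<Rightarrow> ('o \<Rightarrow> 'm) \<Rightarrow> 'o \<Rightarrow> 'm set" where
  "Aut Hom cmp ident A = {h \<in> Hom A A. \<exists>h' \<in> Hom A A. cmp h' h = ident A \<and> cmp h h' = ident A}"

definition aut_subgroup :: "('o \<Rightarrow> 'o \<Rightarrow> 'm set) \<Rightarrow> ('m \<Rightarrow> 'm \<Rightarrow> 'm) \<Rightarrow> ('o \<Rightarrow> 'm) \<Rightarrow> 'o \<Rightarrow> 'm set \<Rightarrow> bool" where
  "aut_subgroup Hom cmp ident A H \<longleftrightarrow> H \<subseteq> Aut Hom cmp ident A \<and> ident A \<in> H \<and>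
     (\<forall>g \<in> H. \<forall>h \<in> H. cmp g h \<in> H) \<and>
     (\<forall>h \<in> H. \<exists>h' \<in> H. cmp h' h = ident A \<and> cmp h h' = ident A)"

definition is_quotient :: "('o \<Rightarrow> 'o \<Rightarrow> 'm set) \<Rightarrow> ('m \<Rightarrow> 'm \<Rightarrow> 'm) \<Rightarrow> 'o \<Rightarrow> 'm set \<Rightarrow> 'o \<Rightarrow> 'm \<Rightarrow> bool" where
  "is_quotient Hom cmp A H Q q \<longleftrightarrow> q \<in> Hom A Q \<and> (\<forall>h \<in> H. cmp q h = q) \<and>
     (\<forall>Z g. g \<in> Hom A Z \<longrightarrow> (\<forall>h \<in> H. cmp g h = g) \<longrightarrow> (\<exists>!k. k \<in> Hom Q Z \<and> g = cmp k q))"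

definition RC0 :: "('o \<Rightarrow> 'o \<Rightarrow> 'm set) \<Rightarrow> ('m \<Rightarrow> 'm \<Rightarrow> 'm) \<Rightarrow> 'o \<Rightarrow> bool" where
  "RC0 Hom cmp A \<longleftrightarrow> (\<forall>X. Hom A X \<noteq> {} \<and> (\<forall>f \<in> Hom A X. strict_epi Hom cmp A X f))"

definition RC1 :: "('o \<Rightarrow> 'o \<Rightarrow> 'm set) \<Rightarrow> ('m \<Rightarrow> 'm \<Rightarrow> 'm) \<Rightarrow> ('o \<Rightarrow> 'm) \<Rightarrow> 'o \<Rightarrow> bool" where
  "RC1 Hom cmp ident A \<longleftrightarrow> (\<forall>H. aut_subgroup Hom cmp ident A H \<longrightarrow>
     (\<exists>Q q. is_quotient Hom cmp A H Q q \<and>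
        (\<forall>p \<in> Hom A Q. \<exists>f \<in> Hom A A. p = cmp q f) \<and>
        (\<forall>f \<in> Hom A A. \<forall>g \<in> Hom A A. cmp q f = cmp q g \<longleftrightarrow> (\<exists>h \<in> H. f = cmp h g))))"

definition RC2 :: "('o \<Rightarrow> 'o \<Rightarrow> 'm set) \<Rightarrow> ('m \<Rightarrow> 'm \<Rightarrow> 'm) \<Rightarrow> ('o \<Rightarrow> 'm) \<Rightarrow> 'o \<Rightarrow> bool" where
  "RC2 Hom cmp ident A \<longleftrightarrow> Hom A A = Aut Hom cmp ident A"

end

theory Submission
  imports Defs
begin

lemma cat_comp: "category Hom cmp ident \<Longrightarrow> f \<in> Hom X Y \<Longrightarrow> g \<in> Hom Y Z \<Longrightarrow> cmp g f \<in> Hom X Z"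
  unfolding category_def by (drule conjunct1) blast
lemma cat_id: "category Hom cmp ident \<Longrightarrow> ident X \<in> Hom X X"
  unfolding category_def by (drule conjunct2, drule conjunct1) blast
lemma cat_idl: "category Hom cmp ident \<Longrightarrow> f \<in> Hom X Y \<Longrightarrow> cmp (ident Y) f = f"
  unfolding category_def by (drule conjunct2, drule conjunct2, drule conjunct1) blast
lemma cat_idr: "category Hom cmp ident \<Longrightarrow> f \<in> Hom X Y \<Longrightarrow> cmp f (ident X) = f"
  unfolding category_def by (drule conjunct2, drule conjunct2, drule conjunct1) blast
lemma cat_assoc: "category Hom cmp ident \<Longrightarrow> f \<in> Hom W X \<Longrightarrow> g \<in> Hom X Y \<Longrightarrow> h \<in> Hom Y Z \<Longrightarrow>
         cmp h (cmp g f) = cmp (cmp h g) f"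
  unfolding category_def by (drule conjunct2, drule conjunct2, drule conjunct2, drule conjunct1) blast

lemma strict_epi_epi:
  assumes cat: "category Hom cmp ident" and se: "strict_epi Hom cmp X Y f"
    and a: "a \<in> Hom Y Z" and b: "b \<in> Hom Y Z" and eq: "cmp a f = cmp b f"
  shows "a = b"
proof -
  have f: "f \<in> Hom X Y" using se unfolding strict_epi_def by blast
  have assoc: "\<And>W X Y Z f g h. f \<in> Hom W X \<Longrightarrow> g \<in> Hom X Y \<Longrightarrow> h \<in> Hom Y Z \<Longrightarrow>
         cmp h (cmp g f) = cmp (cmp h g) f" using cat_assoc[OF cat] by blast
  have comp: "\<And>X Y Z f g. f \<in> Hom X Y \<Longrightarrow> g \<in> Hom Y Z \<Longrightarrow> cmp g f \<in> Hom X Z"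
    using cat_comp[OF cat] by blast
  have g: "cmp a f \<in> Hom X Z" using comp f a by blast
  have compat: "\<forall>C u v. u \<in> Hom C X \<longrightarrow> v \<in> Hom C X \<longrightarrow> cmp f u = cmp f v \<longrightarrow> cmp (cmp a f) u = cmp (cmp a f) v"
  proof (intro allI impI)
    fix C u v assume u: "u \<in> Hom C X" and v: "v \<in> Hom C X" and e: "cmp f u = cmp f v"
    show "cmp (cmp a f) u = cmp (cmp a f) v" using assoc[OF u f a] assoc[OF v f a] e by simp
  qed
  have "\<exists>!k. k \<in> Hom Y Z \<and> cmp a f = cmp k f" using se g compat unfolding strict_epi_def by blast
  then show ?thesis using a b eq by blast
qed

theorem proposition2p10:
  fixes Hom :: "'o \<Rightarrow> 'o \<Rightarrow> 'm set" and cmp :: "'m \<Rightarrow> 'm \<Rightarrow> 'm" and ident :: "'o \<Rightarrow> 'm"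
    and A :: 'o
  assumes "category Hom cmp ident"
    and "RC0 Hom cmp A" and "RC1 Hom cmp ident A" and "RC2 Hom cmp ident A"
  shows "\<forall>X. (\<forall>h \<in> Aut Hom cmp ident A. \<forall>x \<in> Hom A X. cmp x h \<in> Hom A X) \<and>
             Hom A X \<noteq> {} \<and>
             (\<forall>x \<in> Hom A X. \<forall>y \<in> Hom A X. \<exists>h \<in> Aut Hom cmp ident A. y = cmp x h)"
proof (intro allI conjI ballI)
  note cat = assms(1)
  have assoc: "\<And>W X Y Z f g h. f \<in> Hom W X \<Longrightarrow> g \<in> Hom X Y \<Longrightarrow> h \<in> Hom Y Z \<Longrightarrow>
         cmp h (cmp g f) = cmp (cmp h g) f" using cat_assoc[OF cat] by blast
  have comp: "\<And>X Y Z f g. f \<in> Hom X Y \<Longrightarrow> g \<in> Hom Y Z \<Longrightarrow> cmp g f \<in> Hom X Z"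
    using cat_comp[OF cat] by blast
  have idH: "\<And>X. ident X \<in> Hom X X" using cat_id[OF cat] by blast
  have idl: "\<And>X Y f. f \<in> Hom X Y \<Longrightarrow> cmp (ident Y) f = f" using cat_idl[OF cat] by blast
  have idr: "\<And>X Y f. f \<in> Hom X Y \<Longrightarrow> cmp f (ident X) = f" using cat_idr[OF cat] by blast
  have AutE: "Aut Hom cmp ident A = Hom A A" using assms(4) unfolding RC2_def by simp
  have ne: "\<And>X. Hom A X \<noteq> {}" and se: "\<And>X f. f \<in> Hom A X \<Longrightarrow> strict_epi Hom cmp A X f"
    using assms(2) unfolding RC0_def by auto
  fix X
  show "\<And>h x. h \<in> Aut Hom cmp ident A \<Longrightarrow> x \<in> Hom A X \<Longrightarrow> cmp x h \<in> Hom A X"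
    using comp AutE by blast
  show "Hom A X \<noteq> {}" by (rule ne)
  fix x y assume x: "x \<in> Hom A X" and y: "y \<in> Hom A X"
  define H where "H = {h \<in> Hom A A. cmp x h = x}"
  have inv: "\<And>h. h \<in> Hom A A \<Longrightarrow> \<exists>h'\<in>Hom A A. cmp h' h = ident A \<and> cmp h h' = ident A"
    using AutE unfolding Aut_def by blast
  have sg: "aut_subgroup Hom cmp ident A H"
    unfolding aut_subgroup_def
  proof (intro conjI ballI)
    show "H \<subseteq> Aut Hom cmp ident A" using AutE H_def by auto
    show "ident A \<in> H" using H_def idH idr x by auto
    fix g h assume "g \<in> H" "h \<in> H"
    then show "cmp g h \<in> H" using H_def comp[of h A A g] assoc[of h A A g A x X] x by auto
  next
    fix h assume h: "h \<in> H"
    then obtain h' where h': "h' \<in> Hom A A" "cmp h' h = ident A" "cmp h h' = ident A"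
      using inv H_def by auto
    have "cmp x h' = cmp (cmp x h) h'" using h H_def by simp
    also have "\<dots> = cmp x (cmp h h')" using assoc[OF h'(1) _ x, of h] h H_def by auto
    also have "\<dots> = x" using h' idr x by simp
    finally show "\<exists>h'\<in>H. cmp h' h = ident A \<and> cmp h h' = ident A" using h' H_def by auto
  qed
  obtain Q q where quo: "is_quotient Hom cmp A H Q q"
    and surj: "\<forall>p \<in> Hom A Q. \<exists>f \<in> Hom A A. p = cmp q f"
    using assms(3) sg unfolding RC1_def by blast
  have q: "q \<in> Hom A Q" and qH: "\<forall>h\<in>H. cmp q h = q" using quo unfolding is_quotient_def by auto
  have "\<exists>!k. k \<in> Hom Q X \<and> x = cmp k q" using quo x unfolding is_quotient_def H_def by blast
  then obtain k where k: "k \<in> Hom Q X" "x = cmp k q" by blast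
  have compat: "\<forall>C u v. u \<in> Hom C A \<longrightarrow> v \<in> Hom C A \<longrightarrow> cmp x u = cmp x v \<longrightarrow> cmp q u = cmp q v"
  proof (intro allI impI)
    fix C u v assume u: "u \<in> Hom C A" and v: "v \<in> Hom C A" and e: "cmp x u = cmp x v"
    obtain c where c: "c \<in> Hom A C" using ne by blast
    have uc: "cmp u c \<in> Hom A A" and vc: "cmp v c \<in> Hom A A" using comp u v c by auto
    obtain w where w: "w \<in> Hom A A" "cmp w (cmp v c) = ident A" "cmp (cmp v c) w = ident A"
      using inv vc by blast
    define h where "h = cmp (cmp u c) w"
    have hA: "h \<in> Hom A A" using h_def comp uc w by blast
    have ex: "cmp x (cmp u c) = cmp x (cmp v c)" using assoc[OF c u x] assoc[OF c v x] e by simp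
    have "cmp x h = cmp (cmp x (cmp u c)) w" using h_def assoc[OF w(1) uc x] by simp
    also have "\<dots> = cmp (cmp x (cmp v c)) w" using ex by simp
    also have "\<dots> = cmp x (cmp (cmp v c) w)" using assoc[OF w(1) vc x] by simp
    also have "\<dots> = x" using w idr x by simp
    finally have hH: "h \<in> H" using hA H_def by simp
    have "cmp h (cmp v c) = cmp (cmp u c) (cmp w (cmp v c))" using h_def assoc[OF vc w(1) uc] by simp
    also have "\<dots> = cmp u c" using w idr uc by simp
    finally have huc: "cmp h (cmp v c) = cmp u c" .
    have "cmp (cmp q u) c = cmp q (cmp u c)" using assoc[OF c u q] by simp
    also have "\<dots> = cmp q (cmp h (cmp v c))" using huc by simp
    also have "\<dots> = cmp (cmp q h) (cmp v c)" using assoc[OF vc hA q] by simp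
    also have "\<dots> = cmp q (cmp v c)" using qH hH by simp
    also have "\<dots> = cmp (cmp q v) c" using assoc[OF c v q] by simp
    finally have "cmp (cmp q u) c = cmp (cmp q v) c" .
    then show "cmp q u = cmp q v"
      using strict_epi_epi[OF cat se[OF c]] comp q u v by blast
  qed
  have "\<exists>!k'. k' \<in> Hom X Q \<and> q = cmp k' x" using se[OF x] q compat unfolding strict_epi_def by blast
  then obtain k' where k': "k' \<in> Hom X Q" "q = cmp k' x" by blast
  have kk: "cmp k k' = ident X"
  proof (rule strict_epi_epi[OF cat se[OF x]])
    show "cmp k k' \<in> Hom X X" using comp k k' by blast
    show "ident X \<in> Hom X X" by (rule idH)
    have "cmp (cmp k k') x = cmp k (cmp k' x)" using assoc[OF x k'(1) k(1)] by simp
    also have "\<dots> = x" using k'(2)[symmetric] k(2)[symmetric] by simp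
    finally show "cmp (cmp k k') x = cmp (ident X) x" using idl x by simp
  qed
  have "cmp k' y \<in> Hom A Q" using comp k' y by blast
  then obtain f where f: "f \<in> Hom A A" "cmp k' y = cmp q f" using surj by blast
  have "y = cmp (cmp k k') y" using kk idl y by simp
  also have "\<dots> = cmp k (cmp k' y)" using assoc[OF y k'(1) k(1)] by simp
  also have "\<dots> = cmp k (cmp q f)" using f by simp
  also have "\<dots> = cmp x f" using assoc[OF f(1) q k(1)] k(2) by simp
  finally show "\<exists>h\<in>Aut Hom cmp ident A. y = cmp x h" using f AutE by blast
qed

end
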